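(* Let $\phi:\mathbb{R}^d\to\mathbb{R}$ be differentiable and suppose there exist constants $0<m\le M$ such that $$m\|x-y\|^2\le [\nabla\phi(x)-\nabla\phi(y)]^T(x-y)\le M\|x-y\|^2\quad\text{for all }x,y\in\mathbb{R}^d.$$ Let $g:\mathbb{R}^d\to\mathbb{R}^d$ be a map with $\|\nabla\phi(x)-g(x)\|\le\epsilon_g$ for all $x\in\mathbb{R}^d$, and let $f:\mathbb{R}^d\to\mathbb{R}$ satisfy $|\phi(x)-f(x)|\le\epsilon_f$ for all $x$, where $\epsilon_g>0$ and $\epsilon_f\ge 0$. Let $x_k\in\mathbb{R}^d$ and let $s_k\in\mathbb{R}^d$, $s_k\neq 0$, be chosen such that $$s_k^T\left[g(x_k+s_k)-g(x_k)\right]\ge c\,\epsilon_g\|s_k\|$$ for some constant $c>2$. Setting $y_k=g(x_k+s_k)-g(x_k)$, we have $$\frac{s_k^Ty_k}{s_k^Ts_k}\ge\frac{c}{c+2}\,m,\qquad \frac{y_k^Ty_k}{s_k^Ty_k}\le\frac{c}{c-2}\,M.$$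
   Context: $\|\cdot\|$ denotes the Euclidean norm. Here $f$ and $g$ model noisy observations of $\phi$ and $\nabla\phi$. *)

theory Defs
  imports "HOL-Analysis.Analysis"
begin

end

theory Submission
  imports Defs
begin

lemma line_deriv:
  fixes \<phi> :: "'a::euclidean_space \<Rightarrow> real" and grad :: "'a \<Rightarrow> 'a"
  assumes grad: "\<And>x. (\<phi> has_derivative (\<lambda>h. grad x \<bullet> h)) (at x)"
  shows "DERIV (\<lambda>t. \<phi> (x + t *\<^sub>R d)) t :> grad (x + t *\<^sub>R d) \<bullet> d"
proof -
  have l: "((\<lambda>t. x + t *\<^sub>R d) has_derivative (\<lambda>h. h *\<^sub>R d)) (at t)"
    by (auto intro!: derivative_eq_intros)
  have "((\<lambda>t. \<phi> (x + t *\<^sub>R d)) has_derivative (\<lambda>h. grad (x + t *\<^sub>R d) \<bullet> (h *\<^sub>R d))) (at t)"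
    by (rule has_derivative_compose[OF l grad])
  moreover have "(\<lambda>h. grad (x + t *\<^sub>R d) \<bullet> (h *\<^sub>R d)) = (*) (grad (x + t *\<^sub>R d) \<bullet> d)"
    by (auto simp: fun_eq_iff)
  ultimately show ?thesis unfolding has_field_derivative_def by simp
qed

lemma upper_bound:
  fixes \<phi> :: "'a::euclidean_space \<Rightarrow> real" and grad :: "'a \<Rightarrow> 'a"
  assumes grad: "\<And>x. (\<phi> has_derivative (\<lambda>h. grad x \<bullet> h)) (at x)"
    and smooth: "\<And>x y. (grad x - grad y) \<bullet> (x - y) \<le> M * (norm (x - y))\<^sup>2"
  shows "\<phi> y \<le> \<phi> x + grad x \<bullet> (y - x) + M / 2 * (norm (y - x))\<^sup>2"
proof -
  define d where "d = y - x"
  define k where "k t = \<phi> (x + t *\<^sub>R d) - t * (grad x \<bullet> d) - M / 2 * t\<^sup>2 * (norm d)\<^sup>2" for t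
  have "k 0 \<ge> k 1"
  proof (rule DERIV_nonpos_imp_nonincreasing[where f=k and a=0 and b=1])
    fix t :: real assume t: "0 \<le> t" "t \<le> 1"
    have D: "DERIV k t :> grad (x + t *\<^sub>R d) \<bullet> d - grad x \<bullet> d - M * t * (norm d)\<^sup>2"
      unfolding k_def
      by (rule derivative_eq_intros line_deriv[OF grad] | simp)+
    have N: "grad (x + t *\<^sub>R d) \<bullet> d - grad x \<bullet> d - M * t * (norm d)\<^sup>2 \<le> 0"
    proof (cases "t = 0")
      case False
      with t have tp: "t > 0" by simp
      have "(grad (x + t *\<^sub>R d) - grad x) \<bullet> ((x + t *\<^sub>R d) - x) \<le> M * (norm ((x + t *\<^sub>R d) - x))\<^sup>2"
        by (rule smooth)
      then have "t * ((grad (x + t *\<^sub>R d) - grad x) \<bullet> d) \<le> t * (M * t * (norm d)\<^sup>2)"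
        by (simp add: power2_eq_square algebra_simps)
      then have "(grad (x + t *\<^sub>R d) - grad x) \<bullet> d \<le> M * t * (norm d)\<^sup>2"
        using tp by simp
      then show ?thesis by (simp add: inner_diff_left)
    qed simp
    show "\<exists>y. DERIV k t :> y \<and> y \<le> 0" using D N by blast
  qed simp
  then show ?thesis unfolding k_def d_def by simp
qed

lemma lower_bound:
  fixes \<phi> :: "'a::euclidean_space \<Rightarrow> real" and grad :: "'a \<Rightarrow> 'a"
  assumes grad: "\<And>x. (\<phi> has_derivative (\<lambda>h. grad x \<bullet> h)) (at x)"
    and mono: "\<And>x y. 0 \<le> (grad x - grad y) \<bullet> (x - y)"
  shows "\<phi> x + grad x \<bullet> (y - x) \<le> \<phi> y"
proof -
  define d where "d = y - x"
  define k where "k t = \<phi> (x + t *\<^sub>R d) - t * (grad x \<bullet> d)" for t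
  have "k 0 \<le> k 1"
  proof (rule DERIV_nonneg_imp_nondecreasing[where f=k and a=0 and b=1])
    fix t :: real assume t: "0 \<le> t" "t \<le> 1"
    have D: "DERIV k t :> grad (x + t *\<^sub>R d) \<bullet> d - grad x \<bullet> d"
      unfolding k_def
      by (rule derivative_eq_intros line_deriv[OF grad] | simp)+
    have N: "grad (x + t *\<^sub>R d) \<bullet> d - grad x \<bullet> d \<ge> 0"
    proof (cases "t = 0")
      case False
      with t have tp: "t > 0" by simp
      have "0 \<le> (grad (x + t *\<^sub>R d) - grad x) \<bullet> ((x + t *\<^sub>R d) - x)"
        by (rule mono)
      then have "0 \<le> t * ((grad (x + t *\<^sub>R d) - grad x) \<bullet> d)"
        by (simp add: algebra_simps)
      then have "0 \<le> (grad (x + t *\<^sub>R d) - grad x) \<bullet> d"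
        using tp by (simp add: zero_le_mult_iff)
      then show ?thesis by (simp add: inner_diff_left)
    qed simp
    show "\<exists>y. DERIV k t :> y \<and> y \<ge> 0" using D N by blast
  qed simp
  then show ?thesis unfolding k_def d_def by simp
qed

lemma cocoercive:
  fixes \<phi> :: "'a::euclidean_space \<Rightarrow> real" and grad :: "'a \<Rightarrow> 'a"
  assumes grad: "\<And>x. (\<phi> has_derivative (\<lambda>h. grad x \<bullet> h)) (at x)"
    and mono: "\<And>x y. 0 \<le> (grad x - grad y) \<bullet> (x - y)"
    and smooth: "\<And>x y. (grad x - grad y) \<bullet> (x - y) \<le> M * (norm (x - y))\<^sup>2"
    and Mpos: "M > 0"
  shows "(norm (grad y - grad x))\<^sup>2 \<le> M * ((grad y - grad x) \<bullet> (y - x))"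
proof -
  have half: "\<phi> a + grad a \<bullet> (b - a) + (norm (grad b - grad a))\<^sup>2 / (2 * M) \<le> \<phi> b" for a b
  proof -
    define w where "w = grad b - grad a"
    define u where "u = b - (1 / M) *\<^sub>R w"
    have L: "\<phi> a + grad a \<bullet> (u - a) \<le> \<phi> u" by (rule lower_bound[OF grad mono])
    have U: "\<phi> u \<le> \<phi> b + grad b \<bullet> (u - b) + M / 2 * (norm (u - b))\<^sup>2"
      by (rule upper_bound[OF grad smooth])
    have e1: "u - b = - ((1 / M) *\<^sub>R w)" unfolding u_def by simp
    have e2: "(norm (u - b))\<^sup>2 = (norm w)\<^sup>2 / M\<^sup>2" using Mpos
      by (simp add: e1 power_divide)
    have e3: "grad b \<bullet> (u - b) - grad a \<bullet> (u - b) = - ((norm w)\<^sup>2 / M)"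
    proof -
      have "grad b \<bullet> (u - b) - grad a \<bullet> (u - b) = w \<bullet> (u - b)"
        by (simp add: w_def inner_diff_left)
      also have "\<dots> = - ((norm w)\<^sup>2 / M)" by (simp add: e1 power2_norm_eq_inner)
      finally show ?thesis .
    qed
    have e4: "grad a \<bullet> (u - a) = grad a \<bullet> (u - b) + grad a \<bullet> (b - a)"
      by (simp add: inner_diff_right)
    have "M / 2 * (norm (u - b))\<^sup>2 = (norm w)\<^sup>2 / (2 * M)" using Mpos unfolding e2
      by (simp add: power2_eq_square field_simps)
    moreover have "- ((norm w)\<^sup>2 / M) + (norm w)\<^sup>2 / (2 * M) = - ((norm w)\<^sup>2 / (2 * M))"
      using Mpos by (simp add: field_simps)
    ultimately show ?thesis using L U e3 e4 unfolding w_def by linarith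
  qed
  have "\<phi> x + grad x \<bullet> (y - x) + (norm (grad y - grad x))\<^sup>2 / (2 * M) \<le> \<phi> y" by (rule half)
  moreover have "\<phi> y + grad y \<bullet> (x - y) + (norm (grad x - grad y))\<^sup>2 / (2 * M) \<le> \<phi> x" by (rule half)
  moreover have "norm (grad x - grad y) = norm (grad y - grad x)" by (rule norm_minus_commute)
  ultimately have "(norm (grad y - grad x))\<^sup>2 / M \<le> grad y \<bullet> (y - x) - grad x \<bullet> (y - x)"
    by (simp add: inner_diff_right field_simps)
  then have "(norm (grad y - grad x))\<^sup>2 / M \<le> (grad y - grad x) \<bullet> (y - x)"
    by (simp add: inner_diff_left)
  then show ?thesis using Mpos by (simp add: field_simps)
qed

theorem lemma3p1:
  fixes \<phi> :: "'a::euclidean_space \<Rightarrow> real"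
    and grad g :: "'a \<Rightarrow> 'a"
    and f :: "'a \<Rightarrow> real"
    and m M \<epsilon>g \<epsilon>f c :: real
    and xk sk :: 'a
  assumes grad: "\<And>x. (\<phi> has_derivative (\<lambda>h. grad x \<bullet> h)) (at x)"
    and mpos: "0 < m" and mM: "m \<le> M"
    and strong: "\<And>x y. m * (norm (x - y))\<^sup>2 \<le> (grad x - grad y) \<bullet> (x - y)"
    and smooth: "\<And>x y. (grad x - grad y) \<bullet> (x - y) \<le> M * (norm (x - y))\<^sup>2"
    and gerr: "\<And>x. norm (grad x - g x) \<le> \<epsilon>g"
    and ferr: "\<And>x. \<bar>\<phi> x - f x\<bar> \<le> \<epsilon>f"
    and epsg: "\<epsilon>g > 0" and epsf: "\<epsilon>f \<ge> 0"
    and sk: "sk \<noteq> 0"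
    and c: "c > 2"
    and curv: "sk \<bullet> (g (xk + sk) - g xk) \<ge> c * \<epsilon>g * norm sk"
  shows "(let yk = g (xk + sk) - g xk in
           (sk \<bullet> yk) / (sk \<bullet> sk) \<ge> c / (c + 2) * m \<and>
           (yk \<bullet> yk) / (sk \<bullet> yk) \<le> c / (c - 2) * M)"
proof -
  define y where "y = g (xk + sk) - g xk"
  define z where "z = grad (xk + sk) - grad xk"
  define e where "e = y - z"
  define S where "S = norm sk"
  define \<epsilon> where "\<epsilon> = \<epsilon>g"
  define a where "a = sk \<bullet> y"
  have Spos: "S > 0" using sk unfolding S_def by simp
  have Mpos: "M > 0" using mpos mM by simp
  have ep: "\<epsilon> > 0" using epsg unfolding \<epsilon>_def .
  have ss: "sk \<bullet> sk = S\<^sup>2" unfolding S_def by (simp add: power2_norm_eq_inner)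
  have mono: "\<And>x y. 0 \<le> (grad x - grad y) \<bullet> (x - y)"
  proof -
    fix x y :: 'a
    have "0 \<le> m * (norm (x - y))\<^sup>2" using mpos by simp
    also have "\<dots> \<le> (grad x - grad y) \<bullet> (x - y)" by (rule strong)
    finally show "0 \<le> (grad x - grad y) \<bullet> (x - y)" .
  qed
  have e_eq: "e = (grad xk - g xk) - (grad (xk + sk) - g (xk + sk))"
    unfolding e_def y_def z_def by (simp add: algebra_simps)
  have ne: "norm e \<le> 2 * \<epsilon>"
  proof -
    have "norm e \<le> norm (grad xk - g xk) + norm (grad (xk + sk) - g (xk + sk))"
      unfolding e_eq by (rule norm_triangle_ineq4)
    also have "\<dots> \<le> \<epsilon> + \<epsilon>" using gerr unfolding \<epsilon>_def by (intro add_mono) auto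
    finally show ?thesis by simp
  qed
  have szlo: "m * S\<^sup>2 \<le> sk \<bullet> z"
    using strong[of "xk + sk" xk] unfolding z_def S_def by (simp add: inner_commute)
  have szhi: "sk \<bullet> z \<le> M * S\<^sup>2"
    using smooth[of "xk + sk" xk] unfolding z_def S_def by (simp add: inner_commute)
  have co: "(norm z)\<^sup>2 \<le> M * (sk \<bullet> z)"
    using cocoercive[OF grad mono smooth Mpos, of "xk + sk" xk] unfolding z_def
    by (simp add: inner_commute)
  have sy: "c * \<epsilon> * S \<le> a" using curv unfolding a_def y_def \<epsilon>_def S_def .
  have se: "\<bar>sk \<bullet> e\<bar> \<le> S * (2 * \<epsilon>)"
  proof -
    have "\<bar>sk \<bullet> e\<bar> \<le> norm sk * norm e" by (rule Cauchy_Schwarz_ineq2)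
    also have "\<dots> \<le> S * (2 * \<epsilon>)" unfolding S_def using ne by (simp add: mult_left_mono)
    finally show ?thesis .
  qed
  have ysplit: "a = sk \<bullet> z + sk \<bullet> e" unfolding a_def e_def by (simp add: inner_diff_right)
  have apos: "a > 0" using sy c ep Spos by (smt (verit) mult_pos_pos)
  have part1: "c / (c + 2) * m \<le> a / (sk \<bullet> sk)"
  proof -
    have "c * (2 * \<epsilon> * S) \<le> 2 * a" using sy by (simp add: algebra_simps)
    moreover have "m * S\<^sup>2 \<le> a + 2 * \<epsilon> * S" using ysplit szlo se by (simp add: abs_le_iff algebra_simps)
    then have "c * (m * S\<^sup>2) \<le> c * (a + 2 * \<epsilon> * S)" using c by (simp add: mult_left_mono)
    ultimately have "c * (m * S\<^sup>2) \<le> c * a + 2 * a" by (simp add: algebra_simps)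
    then have "c * m * S\<^sup>2 \<le> (c + 2) * a" by (simp add: algebra_simps)
    then show ?thesis unfolding ss using Spos c by (simp add: field_simps)
  qed
  have part2: "y \<bullet> y / a \<le> c / (c - 2) * M"
  proof -
    have nz: "(norm (z - (M / 2) *\<^sub>R sk))\<^sup>2 \<le> (M * S / 2)\<^sup>2"
    proof -
      have "(norm (z - (M / 2) *\<^sub>R sk))\<^sup>2 = (norm z)\<^sup>2 - M * (sk \<bullet> z) + M\<^sup>2 * S\<^sup>2 / 4"
        unfolding S_def power2_norm_eq_inner
        by (simp add: inner_diff_left inner_diff_right inner_commute power2_eq_square algebra_simps)
      then show ?thesis using co by (simp add: power_mult_distrib power_divide)
    qed
    have nz2: "norm (z - (M / 2) *\<^sub>R sk) \<le> M * S / 2"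
      using nz Mpos Spos by (simp add: power_mono_iff abs_le_square_iff)
    have ny: "norm (y - (M / 2) *\<^sub>R sk) \<le> M * S / 2 + 2 * \<epsilon>"
    proof -
      have "y - (M / 2) *\<^sub>R sk = (z - (M / 2) *\<^sub>R sk) + e" unfolding e_def by simp
      then have "norm (y - (M / 2) *\<^sub>R sk) \<le> norm (z - (M / 2) *\<^sub>R sk) + norm e"
        by (metis norm_triangle_ineq)
      then show ?thesis using nz2 ne by simp
    qed
    have ny2: "(norm (y - (M / 2) *\<^sub>R sk))\<^sup>2 \<le> (M * S / 2 + 2 * \<epsilon>)\<^sup>2"
      using ny by (simp add: power_mono)
    have yy: "y \<bullet> y = (norm (y - (M / 2) *\<^sub>R sk))\<^sup>2 + M * a - M\<^sup>2 * S\<^sup>2 / 4"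
      unfolding S_def a_def power2_norm_eq_inner
      by (simp add: inner_diff_left inner_diff_right inner_commute power2_eq_square algebra_simps)
    have yy2: "y \<bullet> y \<le> 2 * \<epsilon> * M * S + 4 * \<epsilon>\<^sup>2 + M * a"
      using yy ny2 by (simp add: power2_eq_square algebra_simps)
    have "a \<le> M * S\<^sup>2 + 2 * \<epsilon> * S" using ysplit szhi se by (simp add: algebra_simps abs_le_iff)
    then have "c * \<epsilon> * S \<le> (M * S + 2 * \<epsilon>) * S" using sy by (simp add: power2_eq_square algebra_simps)
    then have "S * (c * \<epsilon>) \<le> S * (M * S + 2 * \<epsilon>)" by (simp add: algebra_simps)
    then have "c * \<epsilon> \<le> M * S + 2 * \<epsilon>" using Spos mult_le_cancel_left_pos by blast
    then have ce: "(c - 2) * \<epsilon> \<le> M * S" by (simp add: algebra_simps)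
    have k1: "(c - 2) * (4 * \<epsilon>\<^sup>2) \<le> 4 * \<epsilon> * (M * S)"
      using mult_left_mono[OF ce, of "4 * \<epsilon>"] ep by (simp add: power2_eq_square algebra_simps)
    have k2: "c * \<epsilon> * S * (2 * M) \<le> a * (2 * M)" using sy Mpos by simp
    have "(c - 2) * (y \<bullet> y) \<le> (c - 2) * (2 * \<epsilon> * M * S + 4 * \<epsilon>\<^sup>2 + M * a)"
      using yy2 c by simp
    also have "\<dots> \<le> c * M * a" using k1 k2 by (simp add: algebra_simps)
    finally have "(c - 2) * (y \<bullet> y) \<le> c * M * a" .
    then show ?thesis using apos c by (simp add: field_simps)
  qed
  show ?thesis unfolding Let_def using part1 part2 unfolding y_def[symmetric] a_def by simp
qed

end
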